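(* Consider any one of the four basic beta-gamma polymer models (IG, G, B or IB), written in the Mellin form of the context with functions $f^1,f^2$ and parameters $(a_1,a_2,a_3)$. Then \[ \psi_1^{f^1}(a_1)\,\psi_2^{f^2}(a_2)+\psi_1^{f^2}(a_2)\,\psi_2^{f^1}(a_1)>0. \]
   Context: Mellin framework: for $f:(0,\infty)\to[0,\infty)$, $M_f(a)=\int_0^\infty x^{a-1}f(x)\,dx$; $D(M_f)$ is the interior of $\{a:0<M_f(a)<\infty\}$; for $a\in D(M_f)$, $X\sim m_f(a)$ means $X$ has density $M_f(a)^{-1}x^{a-1}f(x)$ on $(0,\infty)$; $\psi^f_n(a)=\frac{\partial^{n+1}}{\partial a^{n+1}}\log M_f(a)$. The four basic beta-gamma models ($\beta>0,\mu>0$) are polymer models on $\mathbb{Z}_+^2$ whose boundary and bulk weights satisfy $(R^1,R^2,X)\sim m_{f^1}(a_1)\otimes m_{f^2}(a_2)\otimes m_{f^1}(a_3)$ with (IG) $\theta\in(0,\mu)$, $f^1(x)=f^2(x)=e^{-\beta/x}$, $(a_1,a_2,a_3)=(\theta-\mu,-\theta,-\mu)$; (G) $\theta>0$, $f^1(x)=e^{-\beta x}$, $f^2(x)=(1-1/x)^{\mu-1}\mathbf 1_{\{x>1\}}$, $(a_1,a_2,a_3)=(\mu+\theta,-\theta,\mu)$; (B) $\theta>0$, $f^1(x)=(1-x)^{\beta-1}\mathbf 1_{\{0<x<1\}}$, $f^2(x)=(1-1/x)^{\mu-1}\mathbf 1_{\{x>1\}}$, $(a_1,a_2,a_3)=(\mu+\theta,-\theta,\mu)$;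 (IB) $\theta\in(0,\mu)$, $f^1(x)=(1-1/x)^{\beta-1}\mathbf 1_{\{x>1\}}$, $f^2(x)=(x/(x+1))^{\beta+\mu}$, $(a_1,a_2,a_3)=(\theta-\mu,-\theta,-\mu)$. (The claim concerns only $f^1,f^2,a_1,a_2$ as given here.) *)

theory Defs
  imports "HOL-Analysis.Analysis"
begin

definition mellin :: "(real \<Rightarrow> real) \<Rightarrow> real \<Rightarrow> real" where
  "mellin f a = (LINT x:{0<..}|lborel. x powr (a - 1) * f x)"

definition mellin_psi :: "nat \<Rightarrow> (real \<Rightarrow> real) \<Rightarrow> real \<Rightarrow> real" where
  "mellin_psi n f a = (deriv ^^ Suc n) (\<lambda>b. ln (mellin f b)) a"

definition psi_cross :: "(real \<Rightarrow> real) \<Rightarrow> (real \<Rightarrow> real) \<Rightarrow> real \<Rightarrow> real \<Rightarrow> real" where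
  "psi_cross f1 f2 a1 a2 =
     mellin_psi 1 f1 a1 * mellin_psi 2 f2 a2 + mellin_psi 1 f2 a2 * mellin_psi 2 f1 a1"

end

theory Submission
  imports Defs
begin


definition SS :: "nat \<Rightarrow> real \<Rightarrow> real" where
  "SS m x = (\<Sum>k. inverse ((x + real k)^m))"

lemma SS_sums: assumes "x > 0" "m \<ge> 2" shows "(\<lambda>k. inverse ((x + real k)^m)) sums SS m x"
proof -
  have "summable (\<lambda>k. inverse ((x + of_nat k)^m))"
    using Polygamma_converges'[of x m] assms by simp
  thus ?thesis by (simp add: SS_def summable_sums)
qed

lemma Polygamma_SS: assumes "x > 0" "n > 0"
  shows "Polygamma n x = (-1)^Suc n * fact n * SS (Suc n) x"
proof -
  have "(\<lambda>k. inverse ((x + of_nat k)^Suc n)) sums ((-1) ^ Suc n * Polygamma n x / fact n)"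
    using Polygamma_LIMSEQ[of x n] assms by simp
  moreover have "(\<lambda>k. inverse ((x + real k)^Suc n)) sums SS (Suc n) x"
    using SS_sums[of x "Suc n"] assms by simp
  ultimately have "SS (Suc n) x = (-1) ^ Suc n * Polygamma n x / fact n"
    using sums_unique2 by simp
  hence h: "fact n * SS (Suc n) x = (-1)^Suc n * Polygamma n x"
    by (simp add: field_simps)
  have "(-1)^Suc n * fact n * SS (Suc n) x = (-1)^Suc n * (fact n * SS (Suc n) x)" by simp
  also have "\<dots> = ((-1)^Suc n * (-1)^Suc n) * Polygamma n x" unfolding h by simp
  also have "(-1)^Suc n * (-1)^Suc n = (1::real)" by (simp add: power_add[symmetric])
  finally show ?thesis by simp
qed

lemma SS_pos: assumes "x > 0" "m \<ge> 2" shows "SS m x > 0"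
proof -
  have "0 < (\<Sum>k. inverse ((x + real k)^m))"
    using SS_sums[OF assms] assms by (intro suminf_pos) (auto simp: sums_iff)
  thus ?thesis by (simp add: SS_def)
qed

lemma SS_CS: assumes "x > 0" "m \<ge> 2"
  shows "(SS (Suc m) x)^2 \<le> SS m x * SS (Suc (Suc m)) x"
proof -
  define c where "c = (\<lambda>k::nat. inverse (x + real k))"
  have cpos: "c k > 0" for k using assms by (simp add: c_def)
  have pw: "inverse ((x + real k)^j) = c k ^ j" for k j by (simp add: c_def power_inverse)
  have fin: "(\<Sum>k<N. c k ^ Suc m)^2 \<le> (\<Sum>k<N. c k ^ m) * (\<Sum>k<N. c k ^ Suc (Suc m))" for N
  proof -
    have "(\<Sum>k<N. sqrt (c k ^ m) * sqrt (c k ^ Suc (Suc m)))^2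
       \<le> (\<Sum>k<N. (sqrt (c k ^ m))^2) * (\<Sum>k<N. (sqrt (c k ^ Suc (Suc m)))^2)"
      by (rule Cauchy_Schwarz_ineq_sum)
    moreover have "sqrt (c k ^ m) * sqrt (c k ^ Suc (Suc m)) = c k ^ Suc m" for k
    proof -
      have "sqrt (c k ^ m) * sqrt (c k ^ Suc (Suc m)) = sqrt ((c k ^ Suc m)^2)"
      proof -
        have "c k ^ m * c k ^ Suc (Suc m) = (c k ^ Suc m)^2" by (simp add: power2_eq_square)
        thus ?thesis by (simp add: real_sqrt_mult[symmetric])
      qed
      also have "\<dots> = c k ^ Suc m" using cpos[of k] by simp
      finally show ?thesis .
    qed
    moreover have "(sqrt (c k ^ j))^2 = c k ^ j" for k j using cpos[of k] by simp
    ultimately show ?thesis by (simp only:)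
  qed
  have s: "(\<lambda>k. c k ^ j) sums SS j x" if "j \<ge> 2" for j
    using SS_sums[of x j] assms that by (simp add: pw)
  have l1: "(\<lambda>N. (\<Sum>k<N. c k ^ Suc m)^2) \<longlonglongrightarrow> (SS (Suc m) x)^2"
    using s[of "Suc m"] assms by (intro tendsto_intros) (simp add: sums_def)
  have l2: "(\<lambda>N. (\<Sum>k<N. c k ^ m) * (\<Sum>k<N. c k ^ Suc (Suc m))) \<longlonglongrightarrow> SS m x * SS (Suc (Suc m)) x"
    using s[of m] s[of "Suc (Suc m)"] assms by (intro tendsto_intros) (simp_all add: sums_def)
  show ?thesis using l1 l2 fin by (intro LIMSEQ_le) auto
qed

lemma P13: assumes "x > (0::real)" shows "Polygamma 1 x * Polygamma 3 x > (Polygamma 2 x)^2"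
proof -
  have e: "Polygamma 1 x = SS 2 x" "Polygamma 2 x = -2 * SS 3 x" "Polygamma 3 x = 6 * SS 4 x"
    using Polygamma_SS[OF assms, of 1] Polygamma_SS[OF assms, of 2] Polygamma_SS[OF assms, of 3]
    by (simp_all add: fact_numeral numeral_eq_Suc)
  have cs: "(SS 3 x)^2 \<le> SS 2 x * SS 4 x" using SS_CS[OF assms, of 2] by (simp add: numeral_eq_Suc)
  have "SS 3 x > 0" using SS_pos[OF assms, of 3] by simp
  thus ?thesis unfolding e using cs by (simp add: power2_eq_square) (smt (verit) mult_pos_pos)
qed

lemma P24: assumes "x > (0::real)" shows "Polygamma 2 x * Polygamma 4 x > (Polygamma 3 x)^2"
proof -
  have e: "Polygamma 2 x = -2 * SS 3 x" "Polygamma 3 x = 6 * SS 4 x" "Polygamma 4 x = -24 * SS 5 x"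
    using Polygamma_SS[OF assms, of 2] Polygamma_SS[OF assms, of 3] Polygamma_SS[OF assms, of 4]
    by (simp_all add: fact_numeral numeral_eq_Suc)
  have cs: "(SS 4 x)^2 \<le> SS 3 x * SS 5 x" using SS_CS[OF assms, of 3] by (simp add: numeral_eq_Suc)
  have "SS 4 x > 0" using SS_pos[OF assms, of 4] by simp
  thus ?thesis unfolding e using cs by (simp add: power2_eq_square) (smt (verit) mult_pos_pos)
qed

lemma nonpos_Int_pos: "(x::real) > 0 \<Longrightarrow> x \<notin> \<int>\<^sub>\<le>\<^sub>0"
  by (auto elim!: nonpos_Ints_cases)

lemma P1_pos: "(x::real) > 0 \<Longrightarrow> Polygamma 1 x > 0"
  by (rule Polygamma_real_odd_pos) (auto elim!: nonpos_Ints_cases)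
lemma P2_neg: "(x::real) > 0 \<Longrightarrow> Polygamma 2 x < 0"
  by (rule Polygamma_real_even_neg) auto
lemma P3_pos: "(x::real) > 0 \<Longrightarrow> Polygamma 3 x > 0"
  by (rule Polygamma_real_odd_pos) (auto elim!: nonpos_Ints_cases)

lemma k0_mono: assumes "0 < x" "x < (y::real)"
  shows "Polygamma 2 x / Polygamma 1 x < Polygamma 2 y / Polygamma 1 y"
proof (rule DERIV_pos_imp_increasing[OF assms(2)])
  fix z assume z: "x \<le> z" "z \<le> y"
  hence zp: "z > 0" using assms by simp
  have "DERIV (\<lambda>t. Polygamma 2 t / Polygamma 1 t) z :>
     (Polygamma 3 z * Polygamma 1 z - Polygamma 2 z * Polygamma 2 z) / (Polygamma 1 z * Polygamma 1 z)"
    using zp P1_pos[OF zp] nonpos_Int_pos[OF zp]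
    by (auto intro!: derivative_eq_intros simp: numeral_eq_Suc power2_eq_square)
  moreover have "(Polygamma 3 z * Polygamma 1 z - Polygamma 2 z * Polygamma 2 z) / (Polygamma 1 z * Polygamma 1 z) > 0"
    using P13[OF zp] P1_pos[OF zp] by (simp add: power2_eq_square mult.commute)
  ultimately show "\<exists>d. DERIV (\<lambda>t. Polygamma 2 t / Polygamma 1 t) z :> d \<and> d > 0" by blast
qed

lemma k_mono: assumes "0 < x" "x < (y::real)"
  shows "Polygamma 3 x / Polygamma 2 x < Polygamma 3 y / Polygamma 2 y"
proof (rule DERIV_pos_imp_increasing[OF assms(2)])
  fix z assume z: "x \<le> z" "z \<le> y"
  hence zp: "z > 0" using assms by simp
  have "DERIV (\<lambda>t. Polygamma 3 t / Polygamma 2 t) z :>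
     (Polygamma 4 z * Polygamma 2 z - Polygamma 3 z * Polygamma 3 z) / (Polygamma 2 z * Polygamma 2 z)"
    using zp P2_neg[OF zp] nonpos_Int_pos[OF zp]
    by (auto intro!: derivative_eq_intros simp: numeral_eq_Suc power2_eq_square)
  moreover have "(Polygamma 4 z * Polygamma 2 z - Polygamma 3 z * Polygamma 3 z) / (Polygamma 2 z * Polygamma 2 z) > 0"
    using P24[OF zp] P2_neg[OF zp] by (intro divide_pos_pos) (simp_all add: power2_eq_square mult.commute mult_neg_neg)
  ultimately show "\<exists>d. DERIV (\<lambda>t. Polygamma 3 t / Polygamma 2 t) z :> d \<and> d > 0" by blast
qed

lemma ineqG: assumes "0 < x" "x < (y::real)"
  shows "Polygamma 1 x * Polygamma 2 y - Polygamma 1 y * Polygamma 2 x > 0"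
proof -
  have yp: "y > 0" using assms by simp
  have "Polygamma 2 x / Polygamma 1 x < Polygamma 2 y / Polygamma 1 y" by (rule k0_mono[OF assms])
  thus ?thesis using P1_pos[OF assms(1)] P1_pos[OF yp] by (simp add: field_simps)
qed

lemma ineqB: assumes "0 < x" "x < y" "y < (c::real)"
  shows "(Polygamma 1 y - Polygamma 1 c) * (Polygamma 2 y - Polygamma 2 x)
       + (Polygamma 1 x - Polygamma 1 y) * (Polygamma 2 y - Polygamma 2 c) > 0"
proof -
  have D: "DERIV (Polygamma n) z :> Polygamma (Suc n) z" if "0 < (z::real)" for n z
    using has_field_derivative_Polygamma[of z n UNIV] nonpos_Int_pos[OF that] by simp
  have C: "isCont (Polygamma n) z" if "0 < (z::real)" for n z
    using D[OF that] by (rule DERIV_isCont)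
  obtain \<xi> where \<xi>: "x < \<xi>" "\<xi> < y"
    "(Polygamma 2 y - Polygamma 2 x) * Polygamma 2 \<xi> = (Polygamma 1 y - Polygamma 1 x) * Polygamma 3 \<xi>"
    using GMVT'[of x y "Polygamma 2" "Polygamma 1" "Polygamma 2" "Polygamma 3"] assms D C
    by (auto simp: numeral_eq_Suc)
  obtain \<eta> where \<eta>: "y < \<eta>" "\<eta> < c"
    "(Polygamma 2 c - Polygamma 2 y) * Polygamma 2 \<eta> = (Polygamma 1 c - Polygamma 1 y) * Polygamma 3 \<eta>"
    using GMVT'[of y c "Polygamma 2" "Polygamma 1" "Polygamma 2" "Polygamma 3"] assms D C
    by (auto simp: numeral_eq_Suc)
  have xp: "\<xi> > 0" "\<eta> > 0" using \<xi> \<eta> assms by auto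
  define k1 where "k1 = Polygamma 3 \<xi> / Polygamma 2 \<xi>"
  define k2 where "k2 = Polygamma 3 \<eta> / Polygamma 2 \<eta>"
  have kk: "k1 < k2" unfolding k1_def k2_def using k_mono[of \<xi> \<eta>] xp \<xi> \<eta> by simp
  have e1: "Polygamma 2 y - Polygamma 2 x = (Polygamma 1 y - Polygamma 1 x) * k1"
    using \<xi>(3) P2_neg[OF xp(1)] unfolding k1_def by (simp add: field_simps)
  have e2: "Polygamma 2 c - Polygamma 2 y = (Polygamma 1 c - Polygamma 1 y) * k2"
    using \<eta>(3) P2_neg[OF xp(2)] unfolding k2_def by (simp add: field_simps)
  have a1: "Polygamma 1 y - Polygamma 1 c > 0"
    using Polygamma_real_strict_antimono[of y c 1] assms by simp
  have a2: "Polygamma 1 x - Polygamma 1 y > 0"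
    using Polygamma_real_strict_antimono[of x y 1] assms by simp
  have "(Polygamma 1 y - Polygamma 1 c) * (Polygamma 2 y - Polygamma 2 x)
       + (Polygamma 1 x - Polygamma 1 y) * (Polygamma 2 y - Polygamma 2 c)
     = (Polygamma 1 y - Polygamma 1 c) * (Polygamma 1 x - Polygamma 1 y) * (k2 - k1)"
  proof -
    have e2': "Polygamma 2 y - Polygamma 2 c = -((Polygamma 1 c - Polygamma 1 y) * k2)"
      using e2 by simp
    show ?thesis unfolding e1 e2' by (simp add: algebra_simps)
  qed
  also have "\<dots> > 0" using a1 a2 kk by simp
  finally show ?thesis .
qed



definition HD :: "real set \<Rightarrow> (nat \<Rightarrow> real \<Rightarrow> real) \<Rightarrow> bool" where
  "HD S G \<longleftrightarrow> (\<forall>j x. x \<in> S \<longrightarrow> (G j has_real_derivative G (Suc j) x) (at x))"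

lemma HD_iter:
  assumes "open S" "HD S G" "\<And>x. x \<in> S \<Longrightarrow> F x = G 0 x" "x \<in> S"
  shows "(deriv ^^ j) F x = G j x"
  using assms(4)
proof (induction j arbitrary: x)
  case 0 thus ?case using assms(3) by simp
next
  case (Suc j)
  have "(G j has_real_derivative G (Suc j) x) (at x)" using assms(2) Suc.prems by (simp add: HD_def)
  hence "((deriv ^^ j) F has_real_derivative G (Suc j) x) (at x)"
    by (rule has_field_derivative_transform_within_open[OF _ assms(1) Suc.prems])
       (use Suc.IH in simp)
  thus ?case by (simp add: DERIV_imp_deriv)
qed

lemma HD_add: "HD S G1 \<Longrightarrow> HD S G2 \<Longrightarrow> HD S (\<lambda>j x. G1 j x + G2 j x)"
  unfolding HD_def by (auto intro!: derivative_intros)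
lemma HD_diff: "HD S G1 \<Longrightarrow> HD S G2 \<Longrightarrow> HD S (\<lambda>j x. G1 j x - G2 j x)"
  unfolding HD_def by (auto intro!: derivative_intros)
lemma HD_const: "HD S (\<lambda>j x. if j = 0 then c else 0)"
  unfolding HD_def by (auto intro!: derivative_eq_intros)
lemma HD_lin: "HD S (\<lambda>j x. if j = 0 then c * x else if j = 1 then c else 0)"
  unfolding HD_def apply (intro allI impI)
  subgoal for j x by (cases j) (auto intro!: derivative_eq_intros)
  done

lemma HD_lnG_plus:
  assumes "\<And>x. x \<in> S \<Longrightarrow> x + d > 0"
  shows "HD S (\<lambda>j x. if j = 0 then ln_Gamma (x + d) else Polygamma (j - 1) (x + d))"
  unfolding HD_def
proof (intro allI impI)
  fix j x assume x: "x \<in> S"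
  have p: "x + d > 0" using assms x by simp
  show "((\<lambda>x. if j = 0 then ln_Gamma (x + d) else Polygamma (j - 1) (x + d)) has_real_derivative
      (if Suc j = 0 then ln_Gamma (x + d) else Polygamma (Suc j - 1) (x + d))) (at x)"
  proof (cases j)
    case 0 thus ?thesis using p by (auto intro!: derivative_eq_intros)
  next
    case (Suc k)
    have "((\<lambda>x. Polygamma k (x + d)) has_real_derivative Polygamma (Suc k) (x + d)) (at x)"
      using has_field_derivative_Polygamma[of "x+d" k UNIV] nonpos_Int_pos[OF p]
      by (auto intro!: derivative_eq_intros DERIV_chain2[where f = "Polygamma k"])
    thus ?thesis using Suc by simp
  qed
qed

lemma HD_lnG_minus:
  assumes "\<And>x. x \<in> S \<Longrightarrow> d - x > 0"
  shows "HD S (\<lambda>j x. if j = 0 then ln_Gamma (d - x) else (-1)^j * Polygamma (j - 1) (d - x))"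
  unfolding HD_def
proof (intro allI impI)
  fix j x assume x: "x \<in> S"
  have p: "d - x > 0" using assms x by simp
  show "((\<lambda>x. if j = 0 then ln_Gamma (d - x) else (-1)^j * Polygamma (j - 1) (d - x)) has_real_derivative
      (if Suc j = 0 then ln_Gamma (d - x) else (-1)^Suc j * Polygamma (Suc j - 1) (d - x))) (at x)"
  proof (cases j)
    case 0 thus ?thesis using p by (auto intro!: derivative_eq_intros)
  next
    case (Suc k)
    have "((\<lambda>x. Polygamma k (d - x)) has_real_derivative Polygamma (Suc k) (d - x) * (-1)) (at x)"
      using has_field_derivative_Polygamma[of "d - x" k UNIV] nonpos_Int_pos[OF p]
      by (auto intro!: derivative_eq_intros DERIV_chain2[where f = "Polygamma k"])
    hence "((\<lambda>x. (-1)^j * Polygamma k (d - x)) has_real_derivative (-1)^j * (Polygamma (Suc k) (d - x) * (-1))) (at x)"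
      by (rule DERIV_cmult)
    thus ?thesis using Suc by simp
  qed
qed



lemma ennreal_mult_ind: "ennreal (f * indicator A x) = ennreal f * indicator A x"
  by (simp split: split_indicator)

lemma exhaust:
  fixes f F :: "real \<Rightarrow> real" and A B :: "nat \<Rightarrow> real set"
  assumes [measurable]: "f \<in> borel_measurable borel" "F \<in> borel_measurable borel"
    and [measurable]: "\<And>n. A n \<in> sets borel" "\<And>n. B n \<in> sets borel"
    and incA: "incseq A" and incB: "incseq B"
    and eq: "\<And>n. (\<integral>\<^sup>+x. ennreal (f x * indicator (A n) x) \<partial>lborel)
              = (\<integral>\<^sup>+x. ennreal (F x * indicator (B n) x) \<partial>lborel)"
  shows "(\<integral>\<^sup>+x. ennreal (f x * indicator (\<Union>n. A n) x) \<partial>lborel)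
       = (\<integral>\<^sup>+x. ennreal (F x * indicator (\<Union>n. B n) x) \<partial>lborel)"
proof -
  have sup: "ennreal (h x * indicator (\<Union>n. C n) x) = (SUP n. ennreal (h x * indicator (C n) x))"
    for h :: "real \<Rightarrow> real" and C :: "nat \<Rightarrow> real set" and x
  proof (cases "x \<in> (\<Union>n. C n)")
    case True
    then obtain m where m: "x \<in> C m" by auto
    show ?thesis
    proof (rule antisym)
      show "ennreal (h x * indicator (\<Union>n. C n) x) \<le> (SUP n. ennreal (h x * indicator (C n) x))"
        using m True by (intro SUP_upper2[of m]) auto
      show "(SUP n. ennreal (h x * indicator (C n) x)) \<le> ennreal (h x * indicator (\<Union>n. C n) x)"
        using True by (intro SUP_least) (auto simp: ennreal_mult_ind split: split_indicator)
    qed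
  next
    case False thus ?thesis by (auto simp: indicator_def)
  qed
  have mono: "incseq (\<lambda>n x. ennreal (h x * indicator (C n) x))" if "incseq C" for h C
    using that unfolding incseq_def le_fun_def
    by (auto simp: ennreal_mult_ind split: split_indicator intro!: mult_left_mono dest!: subsetD)
  have "(\<integral>\<^sup>+x. ennreal (f x * indicator (\<Union>n. A n) x) \<partial>lborel)
      = (\<integral>\<^sup>+x. (SUP n. ennreal (f x * indicator (A n) x)) \<partial>lborel)" by (simp only: sup)
  also have "\<dots> = (SUP n. \<integral>\<^sup>+x. ennreal (f x * indicator (A n) x) \<partial>lborel)"
    by (rule nn_integral_monotone_convergence_SUP[OF mono[OF incA]]) measurable
  also have "\<dots> = (SUP n. \<integral>\<^sup>+x. ennreal (F x * indicator (B n) x) \<partial>lborel)" by (simp only: eq)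
  also have "\<dots> = (\<integral>\<^sup>+x. (SUP n. ennreal (F x * indicator (B n) x)) \<partial>lborel)"
    by (rule nn_integral_monotone_convergence_SUP[OF mono[OF incB], symmetric]) measurable
  also have "\<dots> = (\<integral>\<^sup>+x. ennreal (F x * indicator (\<Union>n. B n) x) \<partial>lborel)" by (simp only: sup)
  finally show ?thesis .
qed

lemma subst_inc:
  fixes f g g' :: "real \<Rightarrow> real"
  assumes [measurable]: "f \<in> borel_measurable borel"
    and "a \<le> b" and "\<And>x. x \<in> {a..b} \<Longrightarrow> (g has_real_derivative g' x) (at x)"
    and "continuous_on {a..b} g'" and "\<And>x. x \<in> {a..b} \<Longrightarrow> g' x \<ge> 0"
  shows "(\<integral>\<^sup>+x. ennreal (f x * indicator {g a..g b} x) \<partial>lborel)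
       = (\<integral>\<^sup>+x. ennreal (f (g x) * g' x * indicator {a..b} x) \<partial>lborel)"
proof -
  have "set_borel_measurable borel {g a..g b} f" unfolding set_borel_measurable_def by measurable
  thus ?thesis
    using nn_integral_substitution[where f=f and g=g and g'=g' and a=a and b=b] assms by (simp add: ennreal_mult_ind)
qed

lemma subst_dec:
  fixes f g g' :: "real \<Rightarrow> real"
  assumes [measurable]: "f \<in> borel_measurable borel" "g' \<in> borel_measurable borel" "g \<in> borel_measurable borel"
    and "a \<le> b" and d: "\<And>x. x \<in> {a..b} \<Longrightarrow> (g has_real_derivative g' x) (at x)"
    and c: "continuous_on {a..b} g'" and n: "\<And>x. x \<in> {a..b} \<Longrightarrow> g' x \<le> 0"
  shows "(\<integral>\<^sup>+x. ennreal (f x * indicator {g b..g a} x) \<partial>lborel)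
       = (\<integral>\<^sup>+x. ennreal (f (g x) * (- g' x) * indicator {a..b} x) \<partial>lborel)"
proof -
  define h where "h = (\<lambda>s. g (- s))"
  define h' where "h' = (\<lambda>s. - g' (- s))"
  have "(\<integral>\<^sup>+x. ennreal (f x * indicator {h (-b)..h (-a)} x) \<partial>lborel)
       = (\<integral>\<^sup>+x. ennreal (f (h x) * h' x * indicator {-b..-a} x) \<partial>lborel)"
  proof (rule subst_inc)
    show "-b \<le> -a" using assms by simp
    show "(h has_real_derivative h' x) (at x)" if "x \<in> {-b..-a}" for x
    proof -
      have "((\<lambda>s. g (- s)) has_real_derivative g' (- x) * (-1)) (at x)"
        using d[of "-x"] that by (intro DERIV_chain2[where f = g]) (auto intro!: derivative_eq_intros)
      thus ?thesis by (simp add: h_def h'_def)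
    qed
    show "continuous_on {-b..-a} h'" unfolding h'_def
      by (intro continuous_intros continuous_on_compose2[OF c]) auto
    show "h' x \<ge> 0" if "x \<in> {-b..-a}" for x unfolding h'_def using n[of "-x"] that by auto
  qed fact
  also have "\<dots> = (\<integral>\<^sup>+x. ennreal (f (h (0 + (-1) * x)) * h' (0 + (-1) * x) * indicator {-b..-a} (0 + (-1) * x)) \<partial>lborel)"
    by (subst nn_integral_real_affine[of _ "-1" 0]) (simp_all add: h_def h'_def)
  also have "\<dots> = (\<integral>\<^sup>+x. ennreal (f (g x) * (- g' x) * indicator {a..b} x) \<partial>lborel)"
    by (rule nn_integral_cong) (auto simp: h_def h'_def indicator_def)
  finally show ?thesis by (simp add: h_def)
qed



lemma U1: assumes "c > (0::real)" shows "(\<Union>n. {c/(real n+1)..c*(real n+1)}) = {0<..}"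
proof (intro equalityI subsetI)
  fix x assume "x \<in> (\<Union>n. {c/(real n+1)..c*(real n+1)})"
  then obtain n where "c/(real n+1) \<le> x" by auto
  moreover have "c/(real n+1) > 0" using assms by simp
  ultimately show "x \<in> {0<..}" by simp
next
  fix x :: real assume "x \<in> {0<..}"
  hence x: "x > 0" by simp
  obtain n :: nat where n: "real n > max (c/x) (x/c)" using reals_Archimedean2 by blast
  have "c/(real n+1) \<le> x"
  proof -
    have "c/x < real n + 1" using n by simp
    thus ?thesis using x by (simp add: divide_simps mult.commute)
  qed
  moreover have "x \<le> c*(real n+1)"
  proof -
    have "x/c < real n + 1" using n by simp
    thus ?thesis using assms by (simp add: divide_simps mult.commute)
  qed
  ultimately show "x \<in> (\<Union>n. {c/(real n+1)..c*(real n+1)})" by auto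
qed

lemma U1_inc: assumes "c > (0::real)" shows "incseq (\<lambda>n. {c/(real n+1)..c*(real n+1)})"
proof (rule incseq_SucI, rule subsetI)
  fix n x assume "x \<in> {c/(real n+1)..c*(real n+1)}"
  moreover have "c/(real (Suc n)+1) \<le> c/(real n+1)" using assms by (intro divide_left_mono) auto
  moreover have "c*(real n+1) \<le> c*(real (Suc n)+1)" using assms by simp
  ultimately show "x \<in> {c/(real (Suc n)+1)..c*(real (Suc n)+1)}" by auto
qed

lemma U2: "(\<Union>n. {1/(real n+2)..1 - 1/(real n+2)}) = {0<..<(1::real)}"
proof (intro equalityI subsetI)
  fix x assume "x \<in> (\<Union>n. {1/(real n+2)..1 - 1/(real n+2)})"
  then obtain n where a: "1/(real n+2) \<le> x" and b: "x \<le> 1 - 1/(real n+2)" by auto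
  have p: "1/(real n+2) > 0" by simp
  have "0 < x" by (rule less_le_trans[OF p a])
  moreover have "x < 1" by (rule le_less_trans[OF b]) simp
  ultimately show "x \<in> {0<..<1}" by simp
next
  fix x :: real assume "x \<in> {0<..<1}"
  hence x: "x > 0" "x < 1" by auto
  obtain n :: nat where n: "real n > max (1/x) (1/(1-x))" using reals_Archimedean2 by blast
  have "1/(real n+2) \<le> x"
  proof -
    have "1/x < real n + 2" using n by simp
    thus ?thesis using x by (simp add: divide_simps mult.commute)
  qed
  moreover have "x \<le> 1 - 1/(real n+2)"
  proof -
    have "1/(1-x) < real n + 2" using n by simp
    hence "1/(real n + 2) < 1 - x" using x
      by (simp add: divide_simps mult.commute)
    thus ?thesis by simp
  qed
  ultimately show "x \<in> (\<Union>n. {1/(real n+2)..1 - 1/(real n+2)})" by auto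
qed

lemma U2_inc: "incseq (\<lambda>n. {1/(real n+2)..1 - 1/(real n+2::real)})"
proof (rule incseq_SucI, rule subsetI)
  fix n x assume "x \<in> {1/(real n+2)..1 - 1/(real n+2::real)}"
  moreover have "1/(real (Suc n)+2) \<le> 1/(real n+2::real)" by (intro divide_left_mono) auto
  ultimately show "x \<in> {1/(real (Suc n)+2)..1 - 1/(real (Suc n)+2::real)}" by auto
qed

lemma U3: "(\<Union>n. {(real n+2)/(real n+1)..real n+2}) = {(1::real)<..}"
proof (intro equalityI subsetI)
  fix x assume "x \<in> (\<Union>n. {(real n+2)/(real n+1)..real n+2})"
  then obtain n where a: "(real n+2)/(real n+1) \<le> x" by auto
  have p: "(real n+2)/(real n+1) > 1" by simp
  have "1 < x" by (rule less_le_trans[OF p a])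
  thus "x \<in> {1<..}" by simp
next
  fix x :: real assume "x \<in> {1<..}"
  hence x: "x > 1" by auto
  obtain n :: nat where n: "real n > max x (1/(x-1))" using reals_Archimedean2 by blast
  have "(real n+2)/(real n+1) \<le> x"
  proof -
    have "1/(x-1) < real n + 1" using n by simp
    hence "1 < (x - 1) * (real n + 1)" using x by (simp add: divide_simps mult.commute)
    thus ?thesis by (simp add: divide_simps algebra_simps)
  qed
  moreover have "x \<le> real n + 2" using n by simp
  ultimately show "x \<in> (\<Union>n. {(real n+2)/(real n+1)..real n+2})" by auto
qed

lemma U3_inc: "incseq (\<lambda>n. {(real n+2)/(real n+1)..real n+2::real})"
proof (rule incseq_SucI, rule subsetI)
  fix n x assume "x \<in> {(real n+2)/(real n+1)..real n+2::real}"
  moreover have "(real (Suc n)+2)/(real (Suc n)+1) \<le> (real n+2)/(real n+1::real)"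
  proof -
    have "(real n+3)*(real n+1) \<le> (real n+2)*(real n+2)" by (simp add: algebra_simps)
    thus ?thesis by (simp add: divide_simps add.commute)
  qed
  ultimately show "x \<in> {(real (Suc n)+2)/(real (Suc n)+1)..real (Suc n)+2::real}" by auto
qed


lemma Gamma_nn: assumes "s > 0"
  shows "(\<integral>\<^sup>+t. ennreal (t powr (s-1) * exp (-t) * indicator {0<..} t) \<partial>lborel) = ennreal (Gamma s)"
proof -
  have "ennreal (Gamma s) = (\<integral>\<^sup>+t. ennreal (indicator {0..} t * t powr (s - 1) / exp t) \<partial>lborel)"
    using Gamma_conv_nn_integral_real[OF assms] by simp
  also have "\<dots> = (\<integral>\<^sup>+t. ennreal (t powr (s-1) * exp (-t) * indicator {0<..} t) \<partial>lborel)"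
    by (rule nn_integral_cong) (auto simp: indicator_def exp_minus field_simps)
  finally show ?thesis by simp
qed

lemma Beta_nn: assumes "a > 0" "b > 0"
  shows "(\<integral>\<^sup>+t. ennreal (t powr (a-1) * (1-t) powr (b-1) * indicator {0<..<1} t) \<partial>lborel) = ennreal (Beta a b)"
proof -
  have "(\<integral>\<^sup>+t. ennreal (indicator {0..1} t * (t powr (a-1) * (1-t) powr (b-1))) \<partial>lborel) = ennreal (Beta a b)"
    using nn_integral_has_integral_lebesgue[OF _ has_integral_Beta_real[OF assms]] by simp
  moreover have "(\<integral>\<^sup>+t. ennreal (indicator {0..1} t * (t powr (a-1) * (1-t) powr (b-1))) \<partial>lborel)
     = (\<integral>\<^sup>+t. ennreal (t powr (a-1) * (1-t) powr (b-1) * indicator {0<..<1} t) \<partial>lborel)"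
    by (rule nn_integral_cong) (auto simp: indicator_def)
  ultimately show ?thesis by simp
qed

lemma mellin_nn:
  assumes [measurable]: "f \<in> borel_measurable borel" and nn: "\<And>x. x > 0 \<Longrightarrow> f x \<ge> 0"
    and eq: "(\<integral>\<^sup>+x. ennreal (x powr (a-1) * f x * indicator {0<..} x) \<partial>lborel) = ennreal V" and "V \<ge> 0"
  shows "mellin f a = V"
proof -
  have m: "(\<lambda>x. x powr (a-1) * f x * indicator {0<..} x) \<in> borel_measurable lborel" by measurable
  have "integrable lborel (\<lambda>x. x powr (a-1) * f x * indicator {0<..} x) \<and>
        integral\<^sup>L lborel (\<lambda>x. x powr (a-1) * f x * indicator {0<..} x) = V"
    using nn_integral_eq_integrable[OF m _ \<open>V \<ge> 0\<close>] eq nn by (auto simp: indicator_def)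
  moreover have "mellin f a = integral\<^sup>L lborel (\<lambda>x. x powr (a-1) * f x * indicator {0<..} x)"
    unfolding mellin_def set_lebesgue_integral_def by (rule Bochner_Integration.integral_cong) (auto simp: indicator_def)
  ultimately show ?thesis by simp
qed

lemma cmult_nn:
  assumes "C \<ge> 0" "\<And>x. x \<in> S \<Longrightarrow> F x = C * H x" and [measurable]: "H \<in> borel_measurable borel" "S \<in> sets borel"
  shows "(\<integral>\<^sup>+x. ennreal (F x * indicator S x) \<partial>lborel) = ennreal C * (\<integral>\<^sup>+x. ennreal (H x * indicator S x) \<partial>lborel)"
proof -
  have "(\<integral>\<^sup>+x. ennreal (F x * indicator S x) \<partial>lborel) = (\<integral>\<^sup>+x. ennreal C * ennreal (H x * indicator S x) \<partial>lborel)"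
    using assms(1,2) by (intro nn_integral_cong) (auto simp: indicator_def ennreal_mult')
  also have "\<dots> = ennreal C * (\<integral>\<^sup>+x. ennreal (H x * indicator S x) \<partial>lborel)"
    by (rule nn_integral_cmult) measurable
  finally show ?thesis .
qed



lemma M_Gexp: assumes b: "\<beta> > 0" and a: "a > 0"
  shows "mellin (\<lambda>x. exp (- \<beta> * x)) a = \<beta> powr (-a) * Gamma a"
proof (rule mellin_nn)
  show "(\<lambda>x. exp (- \<beta> * x)) \<in> borel_measurable borel" by measurable
  show "\<And>x. 0 < x \<Longrightarrow> 0 \<le> exp (- \<beta> * x)" by simp
  show "0 \<le> \<beta> powr (-a) * Gamma a" using a by (simp add: Gamma_real_pos less_imp_le)
  have "(\<integral>\<^sup>+x. ennreal (x powr (a-1) * exp (- \<beta> * x) * indicator {0<..} x) \<partial>lborel)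
     = ennreal \<bar>1/\<beta>\<bar> * (\<integral>\<^sup>+x. ennreal ((0 + 1/\<beta> * x) powr (a-1) * exp (- \<beta> * (0 + 1/\<beta> * x)) * indicator {0<..} (0 + 1/\<beta> * x)) \<partial>lborel)"
    by (rule nn_integral_real_affine) (use b in auto)
  also have "(\<integral>\<^sup>+x. ennreal ((0 + 1/\<beta> * x) powr (a-1) * exp (- \<beta> * (0 + 1/\<beta> * x)) * indicator {0<..} (0 + 1/\<beta> * x)) \<partial>lborel)
      = (\<integral>\<^sup>+x. ennreal ((x/\<beta>) powr (a-1) * exp (- x) * indicator {0<..} x) \<partial>lborel)"
    using b by (intro nn_integral_cong) (auto simp: indicator_def zero_less_divide_iff)
  also have "\<dots> = ennreal (\<beta> powr (1 - a)) * (\<integral>\<^sup>+x. ennreal (x powr (a-1) * exp (- x) * indicator {0<..} x) \<partial>lborel)"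
  proof (rule cmult_nn)
    show "(x/\<beta>) powr (a-1) * exp (- x) = \<beta> powr (1 - a) * (x powr (a-1) * exp (- x))" if "x \<in> {0<..}" for x
      using that b by (simp add: powr_divide powr_diff divide_simps)
  qed (auto)
  also have "(\<integral>\<^sup>+x. ennreal (x powr (a-1) * exp (- x) * indicator {0<..} x) \<partial>lborel) = ennreal (Gamma a)"
    by (rule Gamma_nn[OF a])
  finally show "(\<integral>\<^sup>+x. ennreal (x powr (a-1) * exp (- \<beta> * x) * indicator {0<..} x) \<partial>lborel)
      = ennreal (\<beta> powr (-a) * Gamma a)"
    using b a by (simp add: ennreal_mult'[symmetric] powr_diff powr_minus divide_simps Gamma_real_pos less_imp_le)
qed



lemma M_IG: assumes b: "\<beta> > 0" and a: "a < 0"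
  shows "mellin (\<lambda>x. exp (- \<beta> / x)) a = \<beta> powr a * Gamma (-a)"
proof (rule mellin_nn)
  show "(\<lambda>x. exp (- \<beta> / x)) \<in> borel_measurable borel" by measurable
  show "\<And>x. 0 < x \<Longrightarrow> 0 \<le> exp (- \<beta> / x)" by simp
  show "0 \<le> \<beta> powr a * Gamma (-a)" using a by (simp add: Gamma_real_pos less_imp_le)
  define h where "h = (\<lambda>x. x powr (a-1) * exp (- \<beta> / x))"
  define F where "F = (\<lambda>t. h (\<beta> / t) * (\<beta> / t^2))"
  have [measurable]: "h \<in> borel_measurable borel" "F \<in> borel_measurable borel"
    unfolding h_def F_def by measurable
  have step: "(\<integral>\<^sup>+x. ennreal (h x * indicator {\<beta>/(real n+1)..\<beta>*(real n+1)} x) \<partial>lborel)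
      = (\<integral>\<^sup>+x. ennreal (F x * indicator {1/(real n+1)..1*(real n+1)} x) \<partial>lborel)" for n
  proof -
    have "(\<integral>\<^sup>+x. ennreal (h x * indicator {(\<lambda>t. \<beta>/t) (real n+1)..(\<lambda>t. \<beta>/t) (1/(real n+1))} x) \<partial>lborel)
      = (\<integral>\<^sup>+x. ennreal (h ((\<lambda>t. \<beta>/t) x) * (- (\<lambda>t. - \<beta>/t^2) x) * indicator {1/(real n+1)..real n+1} x) \<partial>lborel)"
    proof (rule subst_dec)
      show "((\<lambda>t. \<beta> / t) has_real_derivative - \<beta> / x\<^sup>2) (at x)" if "x \<in> {1/(real n+1)..real n+1}" for x
      proof -
        have "x > 0" using that by (auto intro: less_le_trans[of 0 "1/(real n+1)"])
        thus ?thesis by (auto intro!: derivative_eq_intros simp: power2_eq_square field_simps)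
      qed
      show "continuous_on {1/(real n+1)..real n+1} (\<lambda>t. - \<beta> / t\<^sup>2)"
        by (intro continuous_intros) (auto dest: less_le_trans[of 0 "1/(real n+1)"])
      show "- \<beta> / x\<^sup>2 \<le> 0" for x using b by simp
      show "1/(real n+1) \<le> real n+1" using mult_mono[of 1 "real n+1" 1 "real n+1"] by (simp add: divide_simps)
    qed measurable
    thus ?thesis by (simp add: F_def)
  qed
  have "(\<integral>\<^sup>+x. ennreal (h x * indicator (\<Union>n. {\<beta>/(real n+1)..\<beta>*(real n+1)}) x) \<partial>lborel)
      = (\<integral>\<^sup>+x. ennreal (F x * indicator (\<Union>n. {1/(real n+1)..1*(real n+1)}) x) \<partial>lborel)"
    by (rule exhaust[OF _ _ _ _ U1_inc[OF b] U1_inc[of 1] step]) auto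
  hence e1: "(\<integral>\<^sup>+x. ennreal (h x * indicator {0<..} x) \<partial>lborel)
      = (\<integral>\<^sup>+x. ennreal (F x * indicator {0<..} x) \<partial>lborel)"
    by (simp only: U1[OF b] U1[of 1])
  also have "\<dots> = ennreal (\<beta> powr a) * (\<integral>\<^sup>+x. ennreal (x powr (-a-1) * exp (- x) * indicator {0<..} x) \<partial>lborel)"
  proof (rule cmult_nn)
    show "F x = \<beta> powr a * (x powr (-a-1) * exp (- x))" if "x \<in> {0<..}" for x
    proof -
      have x: "x > 0" using that by simp
      have "F x = (\<beta> powr (a-1) * \<beta>) * (exp (-x) / (x powr (a-1) * x powr 2))"
        using x b by (simp add: F_def h_def powr_divide power2_eq_square)
      also have "\<beta> powr (a-1) * \<beta> = \<beta> powr a" using b by (simp add: powr_diff)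
      also have "x powr (a-1) * x powr 2 = x powr (a+1)"
      proof -
        have "x powr (a-1) * x powr 2 = x powr (a - 1 + 2)" by (rule powr_add[symmetric])
        thus ?thesis by (simp add: add.commute)
      qed
      also have "exp (-x) / x powr (a+1) = x powr (-a-1) * exp (-x)"
      proof -
        have "x powr (-a-1) = inverse (x powr (a+1))" using x by (simp add: powr_minus[symmetric])
        thus ?thesis by (simp add: divide_inverse)
      qed
      finally show ?thesis .
    qed
  qed (use b in auto)
  also have "(\<integral>\<^sup>+x. ennreal (x powr (-a-1) * exp (- x) * indicator {0<..} x) \<partial>lborel) = ennreal (Gamma (-a))"
    using Gamma_nn[of "-a"] a by simp
  finally show "(\<integral>\<^sup>+x. ennreal (x powr (a-1) * exp (- \<beta> / x) * indicator {0<..} x) \<partial>lborel)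
      = ennreal (\<beta> powr a * Gamma (-a))"
    using b a by (simp add: h_def ennreal_mult'[symmetric])
qed



lemma M_Bdir: assumes b: "\<beta> > 0" and a: "a > 0"
  shows "mellin (\<lambda>x. if 0 < x \<and> x < 1 then (1 - x) powr (\<beta> - 1) else 0) a = Beta a \<beta>"
proof (rule mellin_nn)
  show "(\<lambda>x. if 0 < x \<and> x < 1 then (1 - x) powr (\<beta> - 1) else 0) \<in> borel_measurable borel" by measurable
  show "\<And>x. 0 < x \<Longrightarrow> 0 \<le> (if 0 < x \<and> x < 1 then (1 - x) powr (\<beta> - 1) else 0)" by simp
  show "0 \<le> Beta a \<beta>" using a b by (simp add: Beta_def Gamma_real_pos less_imp_le)
  have "(\<integral>\<^sup>+x. ennreal (x powr (a-1) * (if 0 < x \<and> x < 1 then (1 - x) powr (\<beta> - 1) else 0) * indicator {0<..} x) \<partial>lborel)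
     = (\<integral>\<^sup>+t. ennreal (t powr (a-1) * (1-t) powr (\<beta>-1) * indicator {0<..<1} t) \<partial>lborel)"
    by (rule nn_integral_cong) (auto simp: indicator_def)
  also have "\<dots> = ennreal (Beta a \<beta>)" by (rule Beta_nn[OF a b])
  finally show "(\<integral>\<^sup>+x. ennreal (x powr (a-1) * (if 0 < x \<and> x < 1 then (1 - x) powr (\<beta> - 1) else 0) * indicator {0<..} x) \<partial>lborel)
     = ennreal (Beta a \<beta>)" .
qed

lemma M_Binv: assumes m: "\<mu> > 0" and a: "a < 0"
  shows "mellin (\<lambda>x. if x > 1 then (1 - 1 / x) powr (\<mu> - 1) else 0) a = Beta (-a) \<mu>"
proof (rule mellin_nn)
  show "(\<lambda>x. if x > 1 then (1 - 1 / x) powr (\<mu> - 1) else 0) \<in> borel_measurable borel" by measurable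
  show "\<And>x. 0 < x \<Longrightarrow> 0 \<le> (if x > 1 then (1 - 1 / x) powr (\<mu> - 1) else 0)" by simp
  show "0 \<le> Beta (-a) \<mu>" using a m by (simp add: Beta_def Gamma_real_pos less_imp_le)
  define h where "h = (\<lambda>x. x powr (a-1) * (1 - 1 / x) powr (\<mu> - 1))"
  define F where "F = (\<lambda>t. h (1 / t) * (1 / t^2))"
  have [measurable]: "h \<in> borel_measurable borel" "F \<in> borel_measurable borel"
    unfolding h_def F_def by measurable
  have step: "(\<integral>\<^sup>+x. ennreal (h x * indicator {(real n+2)/(real n+1)..real n+2} x) \<partial>lborel)
      = (\<integral>\<^sup>+x. ennreal (F x * indicator {1/(real n+2)..1 - 1/(real n+2)} x) \<partial>lborel)" for n
  proof -
    have pos: "x > 0" if "x \<in> {1/(real n+2)..1 - 1/(real n+2)}" for x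
      using that by (auto intro: less_le_trans[of 0 "1/(real n+2)"])
    have "(\<integral>\<^sup>+x. ennreal (h x * indicator {(\<lambda>t. 1/t) (1 - 1/(real n+2))..(\<lambda>t. 1/t) (1/(real n+2))} x) \<partial>lborel)
      = (\<integral>\<^sup>+x. ennreal (h ((\<lambda>t. 1/t) x) * (- (\<lambda>t. - 1/t^2) x) * indicator {1/(real n+2)..1 - 1/(real n+2)} x) \<partial>lborel)"
    proof (rule subst_dec)
      show "((\<lambda>t. 1 / t) has_real_derivative - 1 / x\<^sup>2) (at x)" if "x \<in> {1/(real n+2)..1 - 1/(real n+2)}" for x
        using pos[OF that] by (auto intro!: derivative_eq_intros simp: power2_eq_square field_simps)
      show "continuous_on {1/(real n+2)..1 - 1/(real n+2)} (\<lambda>t. - 1 / t\<^sup>2)"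
        by (intro continuous_intros) (use pos in auto)
      show "- 1 / x\<^sup>2 \<le> 0" for x :: real by simp
      show "1/(real n+2) \<le> 1 - 1/(real n+2)" by (simp add: divide_simps)
    qed measurable
    moreover have "1 / (1 - 1/(real n+2)) = (real n+2)/(real n+1)" by (simp add: divide_simps)
    ultimately show ?thesis by (simp add: F_def)
  qed
  have "(\<integral>\<^sup>+x. ennreal (h x * indicator (\<Union>n. {(real n+2)/(real n+1)..real n+2}) x) \<partial>lborel)
      = (\<integral>\<^sup>+x. ennreal (F x * indicator (\<Union>n. {1/(real n+2)..1 - 1/(real n+2)}) x) \<partial>lborel)"
    by (rule exhaust[OF _ _ _ _ U3_inc U2_inc step]) auto
  hence e1: "(\<integral>\<^sup>+x. ennreal (h x * indicator {1<..} x) \<partial>lborel)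
      = (\<integral>\<^sup>+x. ennreal (F x * indicator {0<..<1} x) \<partial>lborel)"
    by (simp only: U2 U3)
  have "(\<integral>\<^sup>+x. ennreal (x powr (a-1) * (if x > 1 then (1 - 1 / x) powr (\<mu> - 1) else 0) * indicator {0<..} x) \<partial>lborel)
      = (\<integral>\<^sup>+x. ennreal (h x * indicator {1<..} x) \<partial>lborel)"
    by (rule nn_integral_cong) (auto simp: indicator_def h_def)
  also note e1
  also have "(\<integral>\<^sup>+x. ennreal (F x * indicator {0<..<1} x) \<partial>lborel)
     = (\<integral>\<^sup>+t. ennreal (t powr (-a-1) * (1-t) powr (\<mu>-1) * indicator {0<..<1} t) \<partial>lborel)"
  proof (rule nn_integral_cong)
    fix t :: real
    show "ennreal (F t * indicator {0<..<1} t) = ennreal (t powr (-a-1) * (1-t) powr (\<mu>-1) * indicator {0<..<1} t)"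
    proof (cases "t \<in> {0<..<1}")
      case True
      hence t: "t > 0" by simp
      have "F t = (1/t) powr (a-1) / t powr 2 * (1 - t) powr (\<mu> - 1)"
        using t by (simp add: F_def h_def)
      also have "(1/t) powr (a-1) / t powr 2 = t powr (-a-1)"
      proof -
        have "(1/t) powr (a-1) / t powr 2 = inverse (t powr (a - 1) * t powr 2)"
          using t by (simp add: powr_divide divide_inverse inverse_powr)
        also have "t powr (a - 1) * t powr 2 = t powr (a - 1 + 2)" by (rule powr_add[symmetric])
        also have "inverse (t powr (a - 1 + 2)) = t powr (-a-1)"
        proof -
          have "-a-1 = - (a - 1 + 2)" by simp
          thus ?thesis using t by (simp only: powr_minus)
        qed
        finally show ?thesis .
      qed
      finally show ?thesis by simp
    qed simp
  qed
  also have "\<dots> = ennreal (Beta (-a) \<mu>)" using Beta_nn[of "-a" \<mu>] a m by simp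
  finally show "(\<integral>\<^sup>+x. ennreal (x powr (a-1) * (if x > 1 then (1 - 1 / x) powr (\<mu> - 1) else 0) * indicator {0<..} x) \<partial>lborel)
      = ennreal (Beta (-a) \<mu>)" .
qed



lemma M_IB2: assumes c: "c > 0" and a: "a < 0" "a + c > 0"
  shows "mellin (\<lambda>x. (x / (x + 1)) powr c) a = Beta (a + c) (-a)"
proof (rule mellin_nn)
  show "(\<lambda>x. (x / (x + 1)) powr c) \<in> borel_measurable borel" by measurable
  show "\<And>x. 0 < x \<Longrightarrow> 0 \<le> (x / (x + 1)) powr c" by simp
  show "0 \<le> Beta (a + c) (-a)" using a c by (simp add: Beta_def Gamma_real_pos less_imp_le)
  define h where "h = (\<lambda>x. x powr (a-1) * (x / (x + 1)) powr c)"
  define F where "F = (\<lambda>t. h (t / (1 - t)) * (1 / (1 - t)^2))"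
  have [measurable]: "h \<in> borel_measurable borel" "F \<in> borel_measurable borel"
    unfolding h_def F_def by measurable
  have step: "(\<integral>\<^sup>+x. ennreal (h x * indicator {1/(real n+1)..1*(real n+1)} x) \<partial>lborel)
      = (\<integral>\<^sup>+x. ennreal (F x * indicator {1/(real n+2)..1 - 1/(real n+2)} x) \<partial>lborel)" for n
  proof -
    have lt1: "x < 1" if "x \<in> {1/(real n+2)..1 - 1/(real n+2)}" for x
    proof -
      have p: "(0::real) < 1/(real n+2)" by simp
      have "x \<le> 1 - 1/(real n+2)" using that by simp
      thus ?thesis using p by linarith
    qed
    have "(\<integral>\<^sup>+x. ennreal (h x * indicator {(\<lambda>t. t/(1-t)) (1/(real n+2))..(\<lambda>t. t/(1-t)) (1 - 1/(real n+2))} x) \<partial>lborel)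
      = (\<integral>\<^sup>+x. ennreal (h ((\<lambda>t. t/(1-t)) x) * (\<lambda>t. 1/(1-t)^2) x * indicator {1/(real n+2)..1 - 1/(real n+2)} x) \<partial>lborel)"
    proof (rule subst_inc)
      show "((\<lambda>t. t / (1 - t)) has_real_derivative 1 / (1 - x)\<^sup>2) (at x)" if "x \<in> {1/(real n+2)..1 - 1/(real n+2)}" for x
        using lt1[OF that] by (auto intro!: derivative_eq_intros simp: power2_eq_square field_simps)
      show "continuous_on {1/(real n+2)..1 - 1/(real n+2)} (\<lambda>t. 1 / (1 - t)\<^sup>2)"
        by (intro continuous_intros) (use lt1 in fastforce)
      show "0 \<le> 1 / (1 - x)\<^sup>2" for x :: real by simp
      show "1/(real n+2) \<le> 1 - 1/(real n+2)" by (simp add: divide_simps)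
    qed measurable
    moreover have "(1/(real n+2)) / (1 - 1/(real n+2)) = 1/(real n+1)" by (simp add: divide_simps)
    moreover have "(1 - 1/(real n+2)) / (1 - (1 - 1/(real n+2))) = 1 * (real n+1)"
    proof -
      have e: "1 - 1/(real n+2) = (real n+1)/(real n+2)" by (simp add: field_simps)
      have "1 - (1 - 1/(real n+2)) = 1/(real n+2)" by simp
      thus ?thesis unfolding e by simp
    qed
    ultimately show ?thesis by (simp only: F_def)
  qed
  have "(\<integral>\<^sup>+x. ennreal (h x * indicator (\<Union>n. {1/(real n+1)..1*(real n+1)}) x) \<partial>lborel)
      = (\<integral>\<^sup>+x. ennreal (F x * indicator (\<Union>n. {1/(real n+2)..1 - 1/(real n+2)}) x) \<partial>lborel)"
    by (rule exhaust[OF _ _ _ _ U1_inc[of 1] U2_inc step]) auto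
  hence e1: "(\<integral>\<^sup>+x. ennreal (h x * indicator {0<..} x) \<partial>lborel)
      = (\<integral>\<^sup>+x. ennreal (F x * indicator {0<..<1} x) \<partial>lborel)"
    by (simp only: U2 U1[of 1])
  have "(\<integral>\<^sup>+x. ennreal (x powr (a-1) * (x / (x + 1)) powr c * indicator {0<..} x) \<partial>lborel)
      = (\<integral>\<^sup>+x. ennreal (h x * indicator {0<..} x) \<partial>lborel)"
    by (simp add: h_def)
  also note e1
  also have "(\<integral>\<^sup>+x. ennreal (F x * indicator {0<..<1} x) \<partial>lborel)
     = (\<integral>\<^sup>+t. ennreal (t powr (a + c - 1) * (1-t) powr (-a-1) * indicator {0<..<1} t) \<partial>lborel)"
  proof (rule nn_integral_cong)
    fix t :: real
    show "ennreal (F t * indicator {0<..<1} t) = ennreal (t powr (a + c - 1) * (1-t) powr (-a-1) * indicator {0<..<1} t)"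
    proof (cases "t \<in> {0<..<1}")
      case True
      hence t: "t > 0" "t < 1" by auto
      hence u: "1 - t > 0" by simp
      have q: "t / (1 - t) / (t / (1 - t) + 1) = t" using t u by (simp add: divide_simps)
      have "F t = (t / (1 - t)) powr (a-1) * t powr c * inverse ((1 - t) powr 2)"
        unfolding F_def h_def q using t u by (simp add: divide_inverse)
      also have "(t / (1 - t)) powr (a-1) = t powr (a-1) * inverse ((1-t) powr (a - 1))"
        using t u by (simp add: powr_divide divide_inverse powr_mult inverse_powr)
      also have "t powr (a-1) * inverse ((1-t) powr (a - 1)) * t powr c * inverse ((1 - t) powr 2)
          = (t powr (a-1) * t powr c) * inverse ((1-t) powr (a - 1) * (1 - t) powr 2)"
        by (simp add: field_simps)
      also have "t powr (a-1) * t powr c = t powr (a + c - 1)"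
      proof -
        have "t powr (a-1) * t powr c = t powr (a - 1 + c)" by (rule powr_add[symmetric])
        thus ?thesis by (simp add: algebra_simps)
      qed
      also have "inverse ((1-t) powr (a - 1) * (1 - t) powr 2) = (1-t) powr (-a-1)"
      proof -
        have "(1-t) powr (a - 1) * (1 - t) powr 2 = (1-t) powr (a - 1 + 2)" by (rule powr_add[symmetric])
        moreover have "-a-1 = - (a - 1 + 2)" by simp
        ultimately show ?thesis using u by (simp only: powr_minus)
      qed
      finally show ?thesis by simp
    qed simp
  qed
  also have "\<dots> = ennreal (Beta (a + c) (-a))" using Beta_nn[of "a + c" "-a"] a c by simp
  finally show "(\<integral>\<^sup>+x. ennreal (x powr (a-1) * (x / (x + 1)) powr c * indicator {0<..} x) \<partial>lborel)
      = ennreal (Beta (a + c) (-a))" .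
qed



lemma gp: "(y::real) > 0 \<Longrightarrow> Gamma y > 0" by (rule Gamma_real_pos)

lemma gp2: "(y::real) > 0 \<Longrightarrow> Gamma y \<noteq> 0" using gp[of y] by linarith

lemma psi_HD:
  assumes "open S" "HD S G" "\<And>x. x \<in> S \<Longrightarrow> ln (mellin f x) = G 0 x" "a \<in> S"
  shows "mellin_psi n f a = G (Suc n) a"
  unfolding mellin_psi_def by (rule HD_iter[OF assms])

lemma psi_IG: assumes b: "\<beta> > 0" and a: "a < 0"
  shows "mellin_psi 1 (\<lambda>x. exp (- \<beta> / x)) a = Polygamma 1 (-a)"
    and "mellin_psi 2 (\<lambda>x. exp (- \<beta> / x)) a = - Polygamma 2 (-a)"
proof -
  let ?G = "\<lambda>j x. (if j = 0 then ln \<beta> * x else if j = 1 then ln \<beta> else 0)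
     + (if j = 0 then ln_Gamma (0 - x) else (-1)^j * Polygamma (j - 1) (0 - x))"
  have HD: "HD {..<0} ?G" by (intro HD_add HD_lin HD_lnG_minus) auto
  have eq: "ln (mellin (\<lambda>x. exp (- \<beta> / x)) x) = ?G 0 x" if "x \<in> {..<0}" for x
  proof -
    have x: "x < 0" using that by simp
    have "ln (mellin (\<lambda>x. exp (- \<beta> / x)) x) = ln (\<beta> powr x * Gamma (-x))" using M_IG[OF b x] by simp
    also have "\<dots> = x * ln \<beta> + ln (Gamma (-x))" using b x gp[of "-x"] gp2[of "-x"] by (simp add: ln_mult ln_powr)
    also have "ln (Gamma (-x)) = ln_Gamma (-x)" using x by (simp add: ln_Gamma_real_pos)
    finally show ?thesis by (simp add: mult.commute)
  qed
  show "mellin_psi 1 (\<lambda>x. exp (- \<beta> / x)) a = Polygamma 1 (-a)"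
    using psi_HD[OF _ HD eq, of a 1] a by (simp add: numeral_eq_Suc)
  show "mellin_psi 2 (\<lambda>x. exp (- \<beta> / x)) a = - Polygamma 2 (-a)"
    using psi_HD[OF _ HD eq, of a 2] a by (simp add: numeral_eq_Suc)
qed

lemma psi_Gexp: assumes b: "\<beta> > 0" and a: "a > 0"
  shows "mellin_psi 1 (\<lambda>x. exp (- \<beta> * x)) a = Polygamma 1 a"
    and "mellin_psi 2 (\<lambda>x. exp (- \<beta> * x)) a = Polygamma 2 a"
proof -
  let ?G = "\<lambda>j x. (if j = 0 then (- ln \<beta>) * x else if j = 1 then - ln \<beta> else 0)
     + (if j = 0 then ln_Gamma (x + 0) else Polygamma (j - 1) (x + 0))"
  have HD: "HD {0<..} ?G" by (intro HD_add HD_lin HD_lnG_plus) auto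
  have eq: "ln (mellin (\<lambda>x. exp (- \<beta> * x)) x) = ?G 0 x" if "x \<in> {0<..}" for x
  proof -
    have x: "x > 0" using that by simp
    have "ln (mellin (\<lambda>x. exp (- \<beta> * x)) x) = ln (\<beta> powr (-x) * Gamma x)" using M_Gexp[OF b x] by simp
    also have "\<dots> = - x * ln \<beta> + ln (Gamma x)" using b x gp[of x] gp2[of x] by (simp add: ln_mult ln_powr)
    also have "ln (Gamma x) = ln_Gamma x" using x by (simp add: ln_Gamma_real_pos)
    finally show ?thesis by (simp add: mult.commute)
  qed
  show "mellin_psi 1 (\<lambda>x. exp (- \<beta> * x)) a = Polygamma 1 a"
    using psi_HD[OF _ HD eq, of a 1] a by (simp add: numeral_eq_Suc)
  show "mellin_psi 2 (\<lambda>x. exp (- \<beta> * x)) a = Polygamma 2 a"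
    using psi_HD[OF _ HD eq, of a 2] a by (simp add: numeral_eq_Suc)
qed

lemma psi_Binv: assumes m: "\<mu> > 0" and a: "a < 0"
  shows "mellin_psi 1 (\<lambda>x. if x > 1 then (1 - 1 / x) powr (\<mu> - 1) else 0) a = Polygamma 1 (-a) - Polygamma 1 (\<mu> - a)"
    and "mellin_psi 2 (\<lambda>x. if x > 1 then (1 - 1 / x) powr (\<mu> - 1) else 0) a = - Polygamma 2 (-a) + Polygamma 2 (\<mu> - a)"
proof -
  let ?f = "\<lambda>x. if x > 1 then (1 - 1 / x) powr (\<mu> - 1) else 0"
  let ?G = "\<lambda>j x. ((if j = 0 then ln_Gamma (0 - x) else (-1)^j * Polygamma (j - 1) (0 - x))
     + (if j = 0 then ln_Gamma \<mu> else 0))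
     - (if j = 0 then ln_Gamma (\<mu> - x) else (-1)^j * Polygamma (j - 1) (\<mu> - x))"
  have HD: "HD {..<0} ?G" by (intro HD_add HD_diff HD_const HD_lnG_minus) (use m in auto)
  have eq: "ln (mellin ?f x) = ?G 0 x" if "x \<in> {..<0}" for x
  proof -
    have x: "x < 0" using that by simp
    have "ln (mellin ?f x) = ln (Beta (-x) \<mu>)" using M_Binv[OF m x] by simp
    also have "\<dots> = ln (Gamma (-x)) + ln (Gamma \<mu>) - ln (Gamma (\<mu> - x))"
      using m x gp[of "-x"] gp2[of "-x"] gp[of \<mu>] gp2[of \<mu>] gp[of "\<mu> - x"] gp2[of "\<mu> - x"]
      by (simp add: Beta_def ln_mult ln_div)
    also have "\<dots> = ln_Gamma (-x) + ln_Gamma \<mu> - ln_Gamma (\<mu> - x)"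
      using m x by (simp add: ln_Gamma_real_pos)
    finally show ?thesis by simp
  qed
  show "mellin_psi 1 ?f a = Polygamma 1 (-a) - Polygamma 1 (\<mu> - a)"
    using psi_HD[OF _ HD eq, of a 1] a by (simp add: numeral_eq_Suc)
  show "mellin_psi 2 ?f a = - Polygamma 2 (-a) + Polygamma 2 (\<mu> - a)"
    using psi_HD[OF _ HD eq, of a 2] a by (simp add: numeral_eq_Suc)
qed

lemma psi_Bdir: assumes b: "\<beta> > 0" and a: "a > 0"
  shows "mellin_psi 1 (\<lambda>x. if 0 < x \<and> x < 1 then (1 - x) powr (\<beta> - 1) else 0) a = Polygamma 1 a - Polygamma 1 (a + \<beta>)"
    and "mellin_psi 2 (\<lambda>x. if 0 < x \<and> x < 1 then (1 - x) powr (\<beta> - 1) else 0) a = Polygamma 2 a - Polygamma 2 (a + \<beta>)"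
proof -
  let ?f = "\<lambda>x. if 0 < x \<and> x < 1 then (1 - x) powr (\<beta> - 1) else 0"
  let ?G = "\<lambda>j x. ((if j = 0 then ln_Gamma (x + 0) else Polygamma (j - 1) (x + 0))
     + (if j = 0 then ln_Gamma \<beta> else 0))
     - (if j = 0 then ln_Gamma (x + \<beta>) else Polygamma (j - 1) (x + \<beta>))"
  have HD: "HD {0<..} ?G" by (intro HD_add HD_diff HD_const HD_lnG_plus) (use b in auto)
  have eq: "ln (mellin ?f x) = ?G 0 x" if "x \<in> {0<..}" for x
  proof -
    have x: "x > 0" using that by simp
    have "ln (mellin ?f x) = ln (Beta x \<beta>)" using M_Bdir[OF b x] by simp
    also have "\<dots> = ln (Gamma x) + ln (Gamma \<beta>) - ln (Gamma (x + \<beta>))"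
      using b x gp[of x] gp2[of x] gp[of \<beta>] gp2[of \<beta>] gp[of "x + \<beta>"] gp2[of "x + \<beta>"]
      by (simp add: Beta_def ln_mult ln_div)
    also have "\<dots> = ln_Gamma x + ln_Gamma \<beta> - ln_Gamma (x + \<beta>)"
      using b x by (simp add: ln_Gamma_real_pos)
    finally show ?thesis by simp
  qed
  show "mellin_psi 1 ?f a = Polygamma 1 a - Polygamma 1 (a + \<beta>)"
    using psi_HD[OF _ HD eq, of a 1] a by (simp add: numeral_eq_Suc)
  show "mellin_psi 2 ?f a = Polygamma 2 a - Polygamma 2 (a + \<beta>)"
    using psi_HD[OF _ HD eq, of a 2] a by (simp add: numeral_eq_Suc)
qed

lemma psi_IB2: assumes c: "c > 0" and a: "a < 0" "a + c > 0"
  shows "mellin_psi 1 (\<lambda>x. (x / (x + 1)) powr c) a = Polygamma 1 (a + c) + Polygamma 1 (-a)"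
    and "mellin_psi 2 (\<lambda>x. (x / (x + 1)) powr c) a = Polygamma 2 (a + c) - Polygamma 2 (-a)"
proof -
  let ?f = "\<lambda>x. (x / (x + 1)) powr c"
  let ?G = "\<lambda>j x. ((if j = 0 then ln_Gamma (x + c) else Polygamma (j - 1) (x + c))
     + (if j = 0 then ln_Gamma (0 - x) else (-1)^j * Polygamma (j - 1) (0 - x)))
     - (if j = 0 then ln_Gamma c else 0)"
  have HD: "HD {-c<..<0} ?G" by (intro HD_add HD_diff HD_const HD_lnG_minus HD_lnG_plus) auto
  have eq: "ln (mellin ?f x) = ?G 0 x" if "x \<in> {-c<..<0}" for x
  proof -
    have x: "x < 0" "x + c > 0" using that by auto
    have "ln (mellin ?f x) = ln (Beta (x + c) (-x))" using M_IB2[OF c x] by simp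
    also have "\<dots> = ln (Gamma (x + c)) + ln (Gamma (-x)) - ln (Gamma c)"
      using c x gp[of "x + c"] gp2[of "x + c"] gp[of c] gp2[of c] gp[of "-x"] gp2[of "-x"]
      by (simp add: Beta_def ln_mult ln_div)
    also have "\<dots> = ln_Gamma (x + c) + ln_Gamma (-x) - ln_Gamma c"
      using c x by (simp add: ln_Gamma_real_pos)
    finally show ?thesis by simp
  qed
  show "mellin_psi 1 ?f a = Polygamma 1 (a + c) + Polygamma 1 (-a)"
    using psi_HD[OF _ HD eq, of a 1] a by (simp add: numeral_eq_Suc)
  show "mellin_psi 2 ?f a = Polygamma 2 (a + c) - Polygamma 2 (-a)"
    using psi_HD[OF _ HD eq, of a 2] a by (simp add: numeral_eq_Suc)
qed



theorem lemmaC2: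
  fixes \<beta> \<mu> \<theta> :: real
  assumes "\<beta> > 0" and "\<mu> > 0"
  shows
    "(0 < \<theta> \<and> \<theta> < \<mu> \<longrightarrow>
        psi_cross (\<lambda>x. exp (- \<beta> / x)) (\<lambda>x. exp (- \<beta> / x)) (\<theta> - \<mu>) (- \<theta>) > 0)
   \<and> (0 < \<theta> \<longrightarrow>
        psi_cross (\<lambda>x. exp (- \<beta> * x))
                  (\<lambda>x. if x > 1 then (1 - 1 / x) powr (\<mu> - 1) else 0) (\<mu> + \<theta>) (- \<theta>) > 0)
   \<and> (0 < \<theta> \<longrightarrow>
        psi_cross (\<lambda>x. if 0 < x \<and> x < 1 then (1 - x) powr (\<beta> - 1) else 0)
                  (\<lambda>x. if x > 1 then (1 - 1 / x) powr (\<mu> - 1) else 0) (\<mu> + \<theta>) (- \<theta>) > 0)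
   \<and> (0 < \<theta> \<and> \<theta> < \<mu> \<longrightarrow>
        psi_cross (\<lambda>x. if x > 1 then (1 - 1 / x) powr (\<beta> - 1) else 0)
                  (\<lambda>x. (x / (x + 1)) powr (\<beta> + \<mu>)) (\<theta> - \<mu>) (- \<theta>) > 0)"
proof (intro conjI impI)
  note b = assms(1) and m = assms(2)
  assume t: "0 < \<theta> \<and> \<theta> < \<mu>"
  have u: "\<mu> - \<theta> > 0" "\<theta> > 0" using t by auto
  show "psi_cross (\<lambda>x. exp (- \<beta> / x)) (\<lambda>x. exp (- \<beta> / x)) (\<theta> - \<mu>) (- \<theta>) > 0"
  proof -
    have "psi_cross (\<lambda>x. exp (- \<beta> / x)) (\<lambda>x. exp (- \<beta> / x)) (\<theta> - \<mu>) (- \<theta>)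
      = Polygamma 1 (\<mu> - \<theta>) * (- Polygamma 2 \<theta>) + Polygamma 1 \<theta> * (- Polygamma 2 (\<mu> - \<theta>))"
    proof -
      have a1: "\<theta> - \<mu> < 0" and a2: "- \<theta> < 0" using t by auto
      show ?thesis unfolding psi_cross_def psi_IG[OF b a1] psi_IG[OF b a2] by simp
    qed
    also have "\<dots> > 0"
    proof (rule add_pos_pos)
      show "Polygamma 1 (\<mu> - \<theta>) * (- Polygamma 2 \<theta>) > 0"
        using P1_pos[OF u(1)] P2_neg[OF u(2)] by (intro mult_pos_pos) auto
      show "Polygamma 1 \<theta> * (- Polygamma 2 (\<mu> - \<theta>)) > 0"
        using P1_pos[OF u(2)] P2_neg[OF u(1)] by (intro mult_pos_pos) auto
    qed
    finally show ?thesis .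
  qed
next
  note b = assms(1) and m = assms(2)
  assume t: "0 < \<theta>"
  have y: "\<mu> + \<theta> > 0" "\<theta> < \<mu> + \<theta>" using t m by auto
  show "psi_cross (\<lambda>x. exp (- \<beta> * x)) (\<lambda>x. if x > 1 then (1 - 1 / x) powr (\<mu> - 1) else 0) (\<mu> + \<theta>) (- \<theta>) > 0"
  proof -
    have "psi_cross (\<lambda>x. exp (- \<beta> * x)) (\<lambda>x. if x > 1 then (1 - 1 / x) powr (\<mu> - 1) else 0) (\<mu> + \<theta>) (- \<theta>)
      = Polygamma 1 \<theta> * Polygamma 2 (\<mu> + \<theta>) - Polygamma 1 (\<mu> + \<theta>) * Polygamma 2 \<theta>"
      unfolding psi_cross_def psi_Gexp[OF b y(1)] psi_Binv[OF m, of "- \<theta>", OF neg_less_0_iff_less[THEN iffD2, OF t]]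
      by (simp add: algebra_simps)
    also have "\<dots> > 0" by (rule ineqG[OF t y(2)])
    finally show ?thesis .
  qed
next
  note b = assms(1) and m = assms(2)
  assume t: "0 < \<theta>"
  have y: "\<mu> + \<theta> > 0" "\<theta> < \<mu> + \<theta>" "\<mu> + \<theta> < \<mu> + \<theta> + \<beta>" using t m b by auto
  show "psi_cross (\<lambda>x. if 0 < x \<and> x < 1 then (1 - x) powr (\<beta> - 1) else 0)
                  (\<lambda>x. if x > 1 then (1 - 1 / x) powr (\<mu> - 1) else 0) (\<mu> + \<theta>) (- \<theta>) > 0"
  proof -
    have "psi_cross (\<lambda>x. if 0 < x \<and> x < 1 then (1 - x) powr (\<beta> - 1) else 0)
                  (\<lambda>x. if x > 1 then (1 - 1 / x) powr (\<mu> - 1) else 0) (\<mu> + \<theta>) (- \<theta>)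
      = (Polygamma 1 (\<mu> + \<theta>) - Polygamma 1 (\<mu> + \<theta> + \<beta>)) * (Polygamma 2 (\<mu> + \<theta>) - Polygamma 2 \<theta>)
       + (Polygamma 1 \<theta> - Polygamma 1 (\<mu> + \<theta>)) * (Polygamma 2 (\<mu> + \<theta>) - Polygamma 2 (\<mu> + \<theta> + \<beta>))"
      unfolding psi_cross_def psi_Bdir[OF b y(1)] psi_Binv[OF m, of "- \<theta>", OF neg_less_0_iff_less[THEN iffD2, OF t]]
      by (simp add: algebra_simps)
    also have "\<dots> > 0" by (rule ineqB[OF t y(2) y(3)])
    finally show ?thesis .
  qed
next
  note b = assms(1) and m = assms(2)
  assume t: "0 < \<theta> \<and> \<theta> < \<mu>"
  define u where "u = \<mu> - \<theta>"
  define C where "C = \<beta> + \<mu> - \<theta>"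
  have u: "u > 0" "\<theta> > 0" "u < C" "C > 0" using t b by (auto simp: u_def C_def)
  have c: "\<beta> + \<mu> > 0" using b m by simp
  show "psi_cross (\<lambda>x. if x > 1 then (1 - 1 / x) powr (\<beta> - 1) else 0)
                  (\<lambda>x. (x / (x + 1)) powr (\<beta> + \<mu>)) (\<theta> - \<mu>) (- \<theta>) > 0"
  proof -
    have "psi_cross (\<lambda>x. if x > 1 then (1 - 1 / x) powr (\<beta> - 1) else 0)
                  (\<lambda>x. (x / (x + 1)) powr (\<beta> + \<mu>)) (\<theta> - \<mu>) (- \<theta>)
      = (Polygamma 1 u * Polygamma 2 C - Polygamma 1 C * Polygamma 2 u)
        + Polygamma 2 \<theta> * (Polygamma 1 C - Polygamma 1 u)
        + Polygamma 1 \<theta> * (Polygamma 2 C - Polygamma 2 u)"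
    proof -
      have a1: "\<theta> - \<mu> < 0" and a2: "- \<theta> < 0" and a3: "- \<theta> + (\<beta> + \<mu>) > 0" using t b by auto
      show ?thesis
        unfolding psi_cross_def psi_Binv[OF b a1] psi_IB2[OF c a2 a3]
        by (simp add: algebra_simps u_def C_def)
    qed
    also have "\<dots> > 0"
    proof -
      have "Polygamma 1 u * Polygamma 2 C - Polygamma 1 C * Polygamma 2 u > 0" by (rule ineqG[OF u(1) u(3)])
      moreover have "Polygamma 2 \<theta> * (Polygamma 1 C - Polygamma 1 u) > 0"
        using P2_neg[OF u(2)] Polygamma_real_strict_antimono[of u C 1] u by (simp add: mult_neg_neg)
      moreover have "Polygamma 1 \<theta> * (Polygamma 2 C - Polygamma 2 u) > 0"
        using P1_pos[OF u(2)] Polygamma_real_strict_mono[of u C 2] u by simp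
      ultimately show ?thesis by simp
    qed
    finally show ?thesis .
  qed
qed

end
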